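(* Let $(X,\mathcal T,P,\leq,\{\sigma_x:x\in X\})$ be a typed topological space and $p\in P$. If $A\subseteq X$ is type-$p$-connected, then (1) $p\vdash CL_n(A)$ is type-$p$-connected for every integer $n>0$, and (2) $p\vdash tr(A)$ is type-$p$-connected.
   Context: A typed topological space $(X,\mathcal T,P,\leq,\{\sigma_x:x\in X\})$ consists of a topological space $(X,\mathcal T)$, a partially ordered set $(P,\leq)$ of types, and for each $x\in X$ a partial function $\sigma_x:\{O\in\mathcal T:x\in O\}\to P$ such that for all $U,V$ in its domain, $\sigma_x(U)\leq\sigma_x(V)$ iff $U\subseteq V$. $U$ is a type-$p$ neighborhood of $x$, written $p\vdash U(x)$, if $U$ is in the domain of $\sigma_x$ and $\sigma_x(U)=p$. $x$ is a $p$-accumulation point of $A$ if every type-$p$ neighborhood of $x$ meets $A$. $p\vdash CL_1(A)=A\cup\{p\text{-accumulation points of }A\}$, $p\vdash CL_n(A)=p\vdash CL_1(p\vdash CL_{n-1}(A))$, $p\vdash tr(A)=\bigcup_{n\ge1}p\vdash CL_n(A)$. A set $A\subseteq X$ is type-$p$-connected if there do not exist two families of type-$p$ neighborhoods $\{p\vdash U(x_i):i\in I\}$ and $\{p\vdash U(x_j):j\in J\}$ (each $U(x_k)$ a type-$p$ neighborhood of the point $x_k$) such that $I\neq\emptyset$, $J\neq\emptyset$, $A=\{x_i:i\in I\}\cup\{x_j:j\in J\}$, and $\left(\bigcup_{i\in I}U(x_i)\right)\cap\left(\bigcup_{j\in J}U(x_j)\right)=\emptyset$. *)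

theory Defs
  imports "HOL-Analysis.Analysis"
begin

text \<open>A typed topological space: topology T on X = topspace T, a poset (P, le)
  given as a carrier P and a partial order relation le on P, and for each point x
  a partial function sig x from open neighbourhoods of x to P (None = undefined).\<close>
definition typed_top_space ::
  "'a topology \<Rightarrow> 'p set \<Rightarrow> ('p \<times> 'p) set \<Rightarrow> ('a \<Rightarrow> 'a set \<Rightarrow> 'p option) \<Rightarrow> bool" where
  "typed_top_space T P le sig \<longleftrightarrow>
     partial_order_on P le \<and>
     (\<forall>x U q. sig x U = Some q \<longrightarrow> openin T U \<and> x \<in> U \<and> q \<in> P) \<and>
     (\<forall>x U V q r. sig x U = Some q \<and> sig x V = Some r \<longrightarrow> ((q, r) \<in> le \<longleftrightarrow> U \<subseteq> V))"

definition type_nbhd :: "('a \<Rightarrow> 'a set \<Rightarrow> 'p option) \<Rightarrow> 'p \<Rightarrow> 'a \<Rightarrow> 'a set \<Rightarrow> bool" where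
  "type_nbhd sig p x U \<longleftrightarrow> sig x U = Some p"

definition p_acc_point :: "('a \<Rightarrow> 'a set \<Rightarrow> 'p option) \<Rightarrow> 'p \<Rightarrow> 'a set \<Rightarrow> 'a \<Rightarrow> bool" where
  "p_acc_point sig p A x \<longleftrightarrow> (\<forall>U. type_nbhd sig p x U \<longrightarrow> U \<inter> A \<noteq> {})"

definition CL1 :: "'a topology \<Rightarrow> ('a \<Rightarrow> 'a set \<Rightarrow> 'p option) \<Rightarrow> 'p \<Rightarrow> 'a set \<Rightarrow> 'a set" where
  "CL1 T sig p A = A \<union> {x \<in> topspace T. p_acc_point sig p A x}"

text \<open>CLn T sig p n A; CLn .. 0 A = A so that CLn .. 1 A = CL1 A.\<close>
fun CLn :: "'a topology \<Rightarrow> ('a \<Rightarrow> 'a set \<Rightarrow> 'p option) \<Rightarrow> 'p \<Rightarrow> nat \<Rightarrow> 'a set \<Rightarrow> 'a set" where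
  "CLn T sig p 0 A = A"
| "CLn T sig p (Suc n) A = CL1 T sig p (CLn T sig p n A)"

definition tr :: "'a topology \<Rightarrow> ('a \<Rightarrow> 'a set \<Rightarrow> 'p option) \<Rightarrow> 'p \<Rightarrow> 'a set \<Rightarrow> 'a set" where
  "tr T sig p A = (\<Union>n\<in>{1..}. CLn T sig p n A)"

text \<open>Type-p-connectedness. The two families {p |- U(x_i) : i in I} and {p |- U(x_j) : j in J}
  are represented as the sets F, G of their (point, neighbourhood) pairs.\<close>
definition type_p_connected :: "('a \<Rightarrow> 'a set \<Rightarrow> 'p option) \<Rightarrow> 'p \<Rightarrow> 'a set \<Rightarrow> bool" where
  "type_p_connected sig p A \<longleftrightarrow>
     \<not> (\<exists>F G :: ('a \<times> 'a set) set.
          (\<forall>(x, U)\<in>F. type_nbhd sig p x U) \<and> (\<forall>(x, U)\<in>G. type_nbhd sig p x U) \<and>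
          F \<noteq> {} \<and> G \<noteq> {} \<and>
          A = fst ` F \<union> fst ` G \<and>
          (\<Union>(snd ` F)) \<inter> (\<Union>(snd ` G)) = {})"

end

theory Submission
  imports Defs
begin

lemma restrict_split:
  assumes F: "\<forall>(x, U)\<in>F. type_nbhd sig p x U" and G: "\<forall>(x, U)\<in>G. type_nbhd sig p x U"
    and B: "B = fst ` F \<union> fst ` G" and D: "(\<Union>(snd ` F)) \<inter> (\<Union>(snd ` G)) = {}"
    and AB: "A \<subseteq> B" and a: "a \<in> A" "a \<in> fst ` F" and b: "b \<in> A" "b \<in> fst ` G"
  shows "\<not> type_p_connected sig p A"
proof -
  let ?F = "{z\<in>F. fst z \<in> A}" and ?G = "{z\<in>G. fst z \<in> A}"
  have "?F \<noteq> {}" using a by auto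
  moreover have "?G \<noteq> {}" using b by auto
  moreover have "A = fst ` ?F \<union> fst ` ?G" using AB B by auto
  moreover have "(\<Union>(snd ` ?F)) \<inter> (\<Union>(snd ` ?G)) = {}" using D by blast
  moreover have "\<forall>(x, U)\<in>?F. type_nbhd sig p x U" using F by auto
  moreover have "\<forall>(x, U)\<in>?G. type_nbhd sig p x U" using G by auto
  ultimately show ?thesis unfolding type_p_connected_def by blast
qed

lemma cl1_side:
  assumes ts: "typed_top_space T P le sig"
    and F: "\<forall>(x, U)\<in>F. type_nbhd sig p x U" and G: "\<forall>(x, U)\<in>G. type_nbhd sig p x U"
    and B: "CL1 T sig p A = fst ` F \<union> fst ` G" and D: "(\<Union>(snd ` F)) \<inter> (\<Union>(snd ` G)) = {}"
    and Gne: "G \<noteq> {}" and AG: "A \<inter> fst ` G = {}"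
  shows False
proof -
  obtain y V where yV: "(y, V) \<in> G" using Gne by auto
  have yc: "y \<in> CL1 T sig p A" using B yV by force
  have ny: "y \<notin> A" using AG yV by force
  have nb: "type_nbhd sig p y V" using G yV by auto
  have "p_acc_point sig p A y" using yc ny unfolding CL1_def by auto
  then obtain a where a: "a \<in> V" "a \<in> A" using nb unfolding p_acc_point_def by blast
  have "a \<in> CL1 T sig p A" using a unfolding CL1_def by auto
  then have "a \<in> fst ` F" using B AG a by auto
  then obtain U where aU: "(a, U) \<in> F" by force
  have "sig a U = Some p" using F aU unfolding type_nbhd_def by auto
  then have "a \<in> U" using ts unfolding typed_top_space_def by blast
  then show False using D a aU yV by force
qed

lemma cl1_conn:
  assumes ts: "typed_top_space T P le sig" and c: "type_p_connected sig p A"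
  shows "type_p_connected sig p (CL1 T sig p A)"
proof (rule ccontr)
  assume "\<not> type_p_connected sig p (CL1 T sig p A)"
  then obtain F G where F: "\<forall>(x, U)\<in>F. type_nbhd sig p x U" and G: "\<forall>(x, U)\<in>G. type_nbhd sig p x U"
    and ne: "F \<noteq> {}" "G \<noteq> {}"
    and B: "CL1 T sig p A = fst ` F \<union> fst ` G" and D: "(\<Union>(snd ` F)) \<inter> (\<Union>(snd ` G)) = {}"
    unfolding type_p_connected_def by blast
  have AB: "A \<subseteq> CL1 T sig p A" unfolding CL1_def by auto
  show False
  proof (cases "A \<inter> fst ` G = {}")
    case True
    then show ?thesis using cl1_side[OF ts F G B D ne(2)] by blast
  next
    case False
    then obtain b where b: "b \<in> A" "b \<in> fst ` G" by blast
    show ?thesis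
    proof (cases "A \<inter> fst ` F = {}")
      case True
      have B': "CL1 T sig p A = fst ` G \<union> fst ` F" using B by auto
      have D': "(\<Union>(snd ` G)) \<inter> (\<Union>(snd ` F)) = {}" using D by auto
      show ?thesis using cl1_side[OF ts G F B' D' ne(1) True] .
    next
      case False
      then obtain a where a: "a \<in> A" "a \<in> fst ` F" by blast
      show ?thesis using restrict_split[OF F G B D AB a b] c by blast
    qed
  qed
qed

lemma cln_conn:
  assumes ts: "typed_top_space T P le sig" and c: "type_p_connected sig p A"
  shows "type_p_connected sig p (CLn T sig p n A)"
  by (induction n) (simp_all add: c cl1_conn[OF ts])

lemma cln_mono: "m \<le> n \<Longrightarrow> CLn T sig p m A \<subseteq> CLn T sig p n A"
proof (induction n)
  case 0 then show ?case by simp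
next
  case (Suc n)
  then show ?case by (cases "m = Suc n") (auto simp: CL1_def)
qed

theorem lemma2p13:
  fixes T :: "'a topology" and P :: "'p set" and le :: "('p \<times> 'p) set"
    and sig :: "'a \<Rightarrow> 'a set \<Rightarrow> 'p option" and p :: 'p and A :: "'a set"
  assumes "typed_top_space T P le sig"
    and "p \<in> P"
    and "A \<subseteq> topspace T"
    and "type_p_connected sig p A"
  shows "(\<forall>n::nat. n > 0 \<longrightarrow> type_p_connected sig p (CLn T sig p n A))
         \<and> type_p_connected sig p (tr T sig p A)"
proof
  show "\<forall>n::nat. n > 0 \<longrightarrow> type_p_connected sig p (CLn T sig p n A)"
    using cln_conn[OF assms(1,4)] by blast
  show "type_p_connected sig p (tr T sig p A)"
  proof (rule ccontr)
    assume "\<not> type_p_connected sig p (tr T sig p A)"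
    then obtain F G where F: "\<forall>(x, U)\<in>F. type_nbhd sig p x U" and G: "\<forall>(x, U)\<in>G. type_nbhd sig p x U"
      and ne: "F \<noteq> {}" "G \<noteq> {}"
      and B: "tr T sig p A = fst ` F \<union> fst ` G" and D: "(\<Union>(snd ` F)) \<inter> (\<Union>(snd ` G)) = {}"
      unfolding type_p_connected_def by blast
    obtain a U where aU: "(a, U) \<in> F" using ne by auto
    obtain b V where bV: "(b, V) \<in> G" using ne by auto
    have "a \<in> tr T sig p A" using B aU by force
    then obtain m where m: "a \<in> CLn T sig p m A" unfolding tr_def by blast
    have "b \<in> tr T sig p A" using B bV by force
    then obtain k where k: "b \<in> CLn T sig p k A" unfolding tr_def by blast
    let ?n = "max m k + 1"
    have am: "a \<in> CLn T sig p ?n A" using m cln_mono[of m ?n T sig p A] by (meson le_add1 max.cobounded1 order_trans subsetD)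
    have bk: "b \<in> CLn T sig p ?n A" using k cln_mono[of k ?n T sig p A] by (meson le_add1 max.cobounded2 order_trans subsetD)
    have sub: "CLn T sig p ?n A \<subseteq> tr T sig p A" unfolding tr_def by force
    have "\<not> type_p_connected sig p (CLn T sig p ?n A)"
      using restrict_split[OF F G B D sub am _ bk] aU bV by force
    then show False using cln_conn[OF assms(1,4)] by blast
  qed
qed

end
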